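(* Let $u$ and $v$ be Laurent polynomials with symmetry such that $vv^\star$ divides $uu^\star$. Then there exists a Laurent polynomial $d$ with symmetry such that $$d\,d^\star=\frac{uu^\star}{vv^\star}.$$ Furthermore, for every Laurent polynomial $d$ with symmetry satisfying this identity, there exists $k\in\mathbb Z$ such that $\mathrm{S}d(z)=z^{2k}\,\mathrm{S}u(z)/\mathrm{S}v(z)$.
   Context: Laurent polynomial $u(z)=\sum_ku(k)z^k$ with finitely many nonzero complex coefficients; $u^\star(z):=\sum_k\overline{u(k)}z^{-k}$. $u$ has symmetry of type $\epsilon z^c$ ($\epsilon\in\{\pm1\},c\in\mathbb Z$) if $u(z)=\epsilon z^cu(z^{-1})$; for nonzero $u$, $\mathrm{S}u(z):=u(z)/u(z^{-1})$; the zero polynomial has symmetry of every type. *)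

theory Defs
  imports Complex_Main
begin

text \<open>A Laurent polynomial u(z) = sum_k u(k) z^k is represented by its coefficient
  function int => complex, required to have finite support.\<close>

definition laurent :: "(int \<Rightarrow> complex) \<Rightarrow> bool" where
  "laurent u \<longleftrightarrow> finite {k. u k \<noteq> 0}"

definition lmult :: "(int \<Rightarrow> complex) \<Rightarrow> (int \<Rightarrow> complex) \<Rightarrow> (int \<Rightarrow> complex)" where
  "lmult u v = (\<lambda>n. \<Sum>k\<in>{k. u k \<noteq> 0}. u k * v (n - k))"

definition lstar :: "(int \<Rightarrow> complex) \<Rightarrow> (int \<Rightarrow> complex)" where
  "lstar u = (\<lambda>k. cnj (u (- k)))"

definition ldvd :: "(int \<Rightarrow> complex) \<Rightarrow> (int \<Rightarrow> complex) \<Rightarrow> bool" where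
  "ldvd a b \<longleftrightarrow> (\<exists>q. laurent q \<and> b = lmult a q)"

text \<open>Symmetry of type eps z^c: u(z) = eps z^c u(z^-1), i.e. u(k) = eps u(c - k).\<close>
definition has_symmetry_type :: "(int \<Rightarrow> complex) \<Rightarrow> int \<Rightarrow> int \<Rightarrow> bool" where
  "has_symmetry_type u \<epsilon> c \<longleftrightarrow> (\<forall>k. u k = of_int \<epsilon> * u (c - k))"

definition has_symmetry :: "(int \<Rightarrow> complex) \<Rightarrow> bool" where
  "has_symmetry u \<longleftrightarrow> (\<exists>\<epsilon> c. \<epsilon> \<in> {1, -1} \<and> has_symmetry_type u \<epsilon> c)"

definition leval :: "(int \<Rightarrow> complex) \<Rightarrow> complex \<Rightarrow> complex" where
  "leval u z = (\<Sum>k\<in>{k. u k \<noteq> 0}. u k * z powi k)"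

definition lS :: "(int \<Rightarrow> complex) \<Rightarrow> complex \<Rightarrow> complex" where
  "lS u z = leval u z / leval u (inverse z)"

end

theory Submission
  imports Defs "HOL-Computational_Algebra.Computational_Algebra"
begin


definition pstar :: "complex poly \<Rightarrow> complex poly" where
  "pstar x = reflect_poly (map_poly cnj x)"

definition psym :: "complex poly \<Rightarrow> bool" where
  "psym x \<longleftrightarrow> x \<noteq> 0 \<and> (\<exists>e\<in>{1,-1}. reflect_poly x = smult e x)"

lemma degree_map_cnj[simp]: "degree (map_poly cnj x) = degree x"
  by (rule degree_map_poly) simp

lemma coeff_map_cnj[simp]: "coeff (map_poly cnj x) n = cnj (coeff x n)"
  by (simp add: coeff_map_poly)

lemma map_cnj_mult: "map_poly cnj (x * y) = map_poly cnj x * map_poly cnj y"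
  by (rule poly_eq_poly_eq_iff[THEN iffD1]) (auto simp: fun_eq_iff)

lemma map_cnj_eq0[simp]: "map_poly cnj x = 0 \<longleftrightarrow> x = 0"
  by (metis coeff_map_cnj complex_cnj_zero_iff leading_coeff_0_iff degree_map_cnj)

lemma pstar_mult: "pstar (x * y) = pstar x * pstar y"
  by (simp add: pstar_def map_cnj_mult reflect_poly_mult)

lemma pstar_smult[simp]: "pstar (smult a x) = smult (cnj a) (pstar x)"
proof -
  have "map_poly cnj (smult a x) = smult (cnj a) (map_poly cnj x)" by (rule poly_eqI) simp
  thus ?thesis by (simp add: pstar_def reflect_poly_smult)
qed

lemma pstar_0[simp]: "pstar 0 = 0" by (simp add: pstar_def)

lemma pstar_eq0[simp]: "pstar x = 0 \<longleftrightarrow> x = 0"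
  by (simp add: pstar_def)

lemma coeff0_nz: "psym x \<Longrightarrow> coeff x 0 \<noteq> 0"
  unfolding psym_def
  by (metis coeff_0_reflect_poly coeff_smult leading_coeff_0_iff mult_eq_0_iff)

lemma degree_pstar: "coeff x 0 \<noteq> 0 \<Longrightarrow> degree (pstar x) = degree x"
  by (simp add: pstar_def)

lemma poly_pstar: "z \<noteq> 0 \<Longrightarrow> poly (pstar x) z = z ^ degree x * cnj (poly x (cnj (inverse z)))"
  by (simp add: pstar_def poly_reflect_poly_nz)

lemma pstar_const[simp]: "pstar [:c:] = [:cnj c:]"
  by (rule poly_eqI) (simp add: pstar_def coeff_reflect_poly coeff_pCons split: nat.split)

lemma psym_cancel:
  assumes "psym (f * y)" "psym f" shows "psym y"
proof -
  obtain e where e: "e \<in> {1,-1}" "reflect_poly (f*y) = smult e (f*y)" using assms(1) unfolding psym_def by blast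
  obtain e' where e': "e' \<in> {1,-1}" "reflect_poly f = smult e' f" using assms(2) unfolding psym_def by blast
  have fz: "f \<noteq> 0" "y \<noteq> 0" using assms psym_def by auto
  have "smult e' f * reflect_poly y = smult e (f * y)" using e e' by (simp add: reflect_poly_mult)
  hence "smult e' (smult e' f * reflect_poly y) = smult e' (smult e (f * y))" by simp
  moreover have "e' * e' = 1" using e' by auto
  ultimately have "f * reflect_poly y = f * smult (e*e') y" by (simp add: mult.assoc[symmetric] mult.commute)
  hence "reflect_poly y = smult (e*e') y" using fz by (metis mult_left_cancel)
  moreover have "e*e' \<in> {1,-1}" using e e' by auto
  ultimately show ?thesis using fz psym_def by blast
qed

definition Q :: "complex \<Rightarrow> complex poly" where
  "Q a = [:-a,1:] * [:-inverse a,1:]"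

lemma Q_eq: "a \<noteq> 0 \<Longrightarrow> Q a = [:1, -(a + inverse a), 1:]"
  by (simp add: Q_def algebra_simps)

lemma reflect_pal: "reflect_poly [:1, b, 1:] = [:1, b::complex, 1:]"
  by (rule poly_eqI) (auto simp: coeff_reflect_poly coeff_pCons split: nat.split)

lemma psym_Q: "a \<noteq> 0 \<Longrightarrow> psym (Q a)"
  unfolding psym_def by (auto simp: Q_eq reflect_pal intro: bexI[of _ 1])

lemma pstar_Q: "a \<noteq> 0 \<Longrightarrow> pstar (Q a) = Q (cnj (inverse a))"
proof -
  assume a: "a \<noteq> 0"
  have "map_poly cnj (Q a) = [:1, -(cnj a + cnj (inverse a)), 1:]"
    using a by (intro poly_eqI) (simp add: Q_eq coeff_pCons split: nat.split)
  thus ?thesis using a by (simp add: pstar_def reflect_pal Q_eq add.commute)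
qed

lemma root_nz: "psym x \<Longrightarrow> poly x a = 0 \<Longrightarrow> a \<noteq> 0"
  using coeff0_nz poly_0_coeff_0 by metis

lemma root_inv: assumes "psym x" "poly x a = 0" shows "poly x (inverse a) = 0"
proof -
  have a: "a \<noteq> 0" using root_nz assms by blast
  obtain e where e: "e \<in> {1,-1}" "reflect_poly x = smult e x" using assms(1) unfolding psym_def by blast
  have "poly (reflect_poly x) a = 0" using e assms by simp
  thus ?thesis using a by (simp add: poly_reflect_poly_nz)
qed

lemma Q_dvd: assumes "psym x" "poly x a = 0" "a * a \<noteq> 1" shows "Q a dvd x"
proof -
  have a: "a \<noteq> 0" using root_nz assms by blast
  obtain x1 where x1: "x = [:-a,1:] * x1" using assms(2) poly_eq_0_iff_dvd by blast
  have "poly x (inverse a) = 0" using root_inv assms by blast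
  moreover have "inverse a - a \<noteq> 0" using a assms(3)
    by (metis eq_iff_diff_eq_0 left_inverse)
  ultimately have "poly x1 (inverse a) = 0" using x1 by simp
  then obtain x2 where "x1 = [:-inverse a,1:] * x2" using poly_eq_0_iff_dvd by blast
  hence "x = Q a * x2" using x1 by (simp only: Q_def mult.assoc)
  thus ?thesis by (rule dvdI)
qed

lemma lin_psym: assumes "a * a = 1" shows "psym [:-a,1:]"
proof -
  have "a = 1 \<or> a = -1" using assms
    by (metis (no_types, lifting) add.inverse_inverse mult_cancel_left2 square_eq_1_iff)
  have "reflect_poly [:-a,1:] = [:1,-a:]"
    by (simp add: reflect_poly_pCons' monom_Suc monom_0)
  also have "\<dots> = smult (-a) [:-a,1:]" using assms by simp
  finally show ?thesis unfolding psym_def using \<open>a = 1 \<or> a = -1\<close> by auto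
qed

lemma root_pstar: "poly (pstar p) a = 0 \<Longrightarrow> a \<noteq> 0 \<Longrightarrow> poly p (cnj (inverse a)) = 0"
  by (simp add: poly_pstar)

lemma existence_aux:
  "\<And>q p. degree q = n \<Longrightarrow> psym q \<Longrightarrow> psym p \<Longrightarrow> (q * pstar q) dvd (p * pstar p) \<Longrightarrow>
     \<exists>D. psym D \<and> D * pstar D * (q * pstar q) = p * pstar p"
proof (induction n rule: less_induct)
  case (less n q p)
  show ?case
  proof (cases "n = 0")
    case True
    define c where "c = coeff q 0"
    have qc: "q = [:c:]" using True less.prems(1) c_def by (metis degree0_coeffs coeff_pCons_0)
    have c0: "c \<noteq> 0" using coeff0_nz[OF less.prems(2)] c_def by simp
    define r where "r = complex_of_real (1 / cmod c)"
    define D where "D = [:r:] * p"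
    have cr: "cnj r = r" by (simp add: r_def)
    have "r * r * (c * cnj c) = complex_of_real ((1 / cmod c) * (1 / cmod c) * (cmod c)^2)"
      by (simp only: r_def complex_norm_square[symmetric] of_real_mult)
    also have "\<dots> = 1" using c0 by (simp add: field_simps power2_eq_square)
    finally have r2: "r * r * (c * cnj c) = 1" .
    have r0: "r \<noteq> 0" using c0 by (simp add: r_def)
    have "D * pstar D * (q * pstar q) = [:r * r * (c * cnj c):] * (p * pstar p)"
      by (simp add: D_def qc pstar_mult cr algebra_simps)
    also have "\<dots> = p * pstar p" using r2 by simp
    finally have eq: "D * pstar D * (q * pstar q) = p * pstar p" .
    obtain e where e: "e \<in> {1,-1}" "reflect_poly p = smult e p" using less.prems(3) unfolding psym_def by blast
    have "reflect_poly D = smult e D" using e by (simp add: D_def reflect_poly_smult mult.commute)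
    moreover have "D \<noteq> 0" using r0 less.prems(3) by (simp add: D_def psym_def)
    ultimately have "psym D" using e psym_def by blast
    thus ?thesis using eq by blast
  next
    case False
    have step: "\<exists>D. psym D \<and> D * pstar D * (q * pstar q) = p * pstar p"
      if qf: "q = f * q2" and pg: "p = g * p2" and fg: "f * pstar f = g * pstar g"
        and f0: "degree f > 0" and pf: "psym f" and pg': "psym g" for f g q2 p2
    proof -
      have sq2: "psym q2" using psym_cancel qf pf less.prems(2) by blast
      have sp2: "psym p2" using psym_cancel pg pg' less.prems(3) by blast
      have nz: "f \<noteq> 0" "q2 \<noteq> 0" using pf sq2 psym_def by auto
      have dq: "degree q2 < n" using less.prems(1) qf nz f0 by (simp add: degree_mult_eq)
      have ff0: "f * pstar f \<noteq> 0" using nz by simp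
      have e1: "q * pstar q = (f * pstar f) * (q2 * pstar q2)" using qf by (simp add: pstar_mult algebra_simps)
      have "p * pstar p = (g * pstar g) * (p2 * pstar p2)" using pg by (simp add: pstar_mult algebra_simps)
      hence e2: "p * pstar p = (f * pstar f) * (p2 * pstar p2)" using fg by simp
      have "(f * pstar f) * (q2 * pstar q2) dvd (f * pstar f) * (p2 * pstar p2)"
        using less.prems(4) e1 e2 by simp
      hence dv: "q2 * pstar q2 dvd p2 * pstar p2" using ff0 by simp
      obtain D where D: "psym D" "D * pstar D * (q2 * pstar q2) = p2 * pstar p2"
        using less.IH[OF dq refl sq2 sp2 dv] by blast
      have "D * pstar D * (q * pstar q) = (D * pstar D * (q2 * pstar q2)) * (f * pstar f)"
        using qf by (simp add: pstar_mult algebra_simps)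
      also have "\<dots> = p * pstar p" using D(2) pg fg by (simp add: pstar_mult algebra_simps)
      finally show ?thesis using D(1) by blast
    qed
    have "\<not> constant (poly q)" using False less.prems(1) constant_degree[of q] by simp
    then obtain a where a: "poly q a = 0"
      using fundamental_theorem_of_algebra by blast
    have a0: "a \<noteq> 0" using root_nz less.prems(2) a by blast
    have "poly (q * pstar q) a = 0" using a by simp
    hence "poly (p * pstar p) a = 0" using less.prems(4) by (metis dvdE mult_eq_0_iff poly_mult)
    hence pa: "poly p a = 0 \<or> poly p (cnj (inverse a)) = 0" using root_pstar a0 by auto
    show ?thesis
    proof (cases "a * a = 1")
      case True
      have inv: "cnj (inverse a) = a" using True
        by (metis (no_types, lifting) add.inverse_inverse complex_cnj_minus complex_cnj_one
            inverse_minus_eq inverse_1 mult_cancel_left2 square_eq_1_iff)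
      have "poly p a = 0" using pa inv by auto
      then obtain p2 where p2: "p = [:-a,1:] * p2" using poly_eq_0_iff_dvd by blast
      obtain q2 where q2: "q = [:-a,1:] * q2" using a poly_eq_0_iff_dvd by blast
      show ?thesis by (rule step[OF q2 p2 refl _ lin_psym[OF True] lin_psym[OF True]]) simp
    next
      case False
      obtain q2 where q2: "q = Q a * q2" using Q_dvd[OF less.prems(2) a False] by blast
      have dQ: "degree (Q a) > 0" using a0 by (simp add: Q_eq)
      show ?thesis
      proof (cases "poly p a = 0")
        case True
        obtain p2 where p2: "p = Q a * p2" using Q_dvd[OF less.prems(3) True False] by blast
        show ?thesis by (rule step[OF q2 p2 refl dQ psym_Q[OF a0] psym_Q[OF a0]])
      next
        case F2: False
        define b where "b = cnj (inverse a)"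
        have pb: "poly p b = 0" using pa F2 b_def by auto
        have b0: "b \<noteq> 0" using a0 b_def by simp
        have bb: "b * b \<noteq> 1" using False b_def
          by (metis complex_cnj_cnj complex_cnj_mult complex_cnj_one inverse_1 inverse_mult_distrib inverse_inverse_eq)
        obtain p2 where p2: "p = Q b * p2" using Q_dvd[OF less.prems(3) pb bb] by blast
        have sb: "pstar (Q a) = Q b" using pstar_Q[OF a0] b_def by simp
        have sa: "pstar (Q b) = Q a" using pstar_Q[OF b0] b_def by simp
        have fg: "Q a * pstar (Q a) = Q b * pstar (Q b)" using sa sb by (simp add: mult.commute)
        show ?thesis by (rule step[OF q2 p2 fg dQ psym_Q[OF a0] psym_Q[OF b0]])
      qed
    qed
  qed
qed

lemma reflect_lin1: "reflect_poly [:-1,1:] = smult (-1) [:-1, 1::complex:]"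
  by (simp add: reflect_poly_pCons' monom_Suc monom_0)

lemma refl_pow: "reflect_poly (L::complex poly) = smult c L \<Longrightarrow> reflect_poly (L^k) = smult (c^k) (L^k)"
  by (simp only: reflect_poly_power smult_power)

lemma pstar_pow: "pstar L = smult c L \<Longrightarrow> pstar (L^k) = smult (c^k) (L^k)"
proof (induction k)
  case 0 thus ?case by (simp add: pstar_def)
next
  case (Suc k) thus ?case by (simp add: pstar_mult mult_ac)
qed

lemma sym_order:
  fixes x :: "complex poly"
  assumes "x \<noteq> 0" "reflect_poly x = smult e x"
  shows "e = (-1) ^ order 1 x"
proof -
  define m where "m = order 1 x"
  obtain y where y: "x = [:-1,1:] ^ m * y" "\<not> [:-1,1:] dvd y"
    using order_decomp[OF assms(1), of 1] m_def by auto
  have y1: "poly y 1 \<noteq> 0" using y(2) poly_eq_0_iff_dvd by auto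
  have y0: "y \<noteq> 0" using y1 by auto
  have pw: "reflect_poly ([:-1,1:] ^ k) = smult ((-1)^k) ([:-1,1::complex:] ^ k)" for k
    using refl_pow[OF reflect_lin1] .
  have "reflect_poly x = reflect_poly ([:-1,1:] ^ m) * reflect_poly y"
    using y(1) reflect_poly_mult by metis
  hence "reflect_poly x = smult ((-1)^m) ([:-1,1:] ^ m) * reflect_poly y"
    by (simp only: pw)
  hence G: "smult ((-1)^m) ([:-1,1:] ^ m) * reflect_poly y = smult e x"
    using assms(2) by (rule trans[OF sym])
  hence "smult ((-1)^m) ([:-1,1:] ^ m) * reflect_poly y = smult e ([:-1,1:] ^ m * y)"
    by (simp only: y(1))
  hence "[:-1,1:] ^ m * smult ((-1)^m) (reflect_poly y) = [:-1,1:] ^ m * smult e y"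
    by (simp add: mult_ac)
  moreover have nz: "[:-1,1::complex:] ^ m \<noteq> 0" by simp
  ultimately have "smult ((-1)^m) (reflect_poly y) = smult e y" using mult_left_cancel[OF nz] by blast
  hence "poly (smult ((-1)^m) (reflect_poly y)) 1 = poly (smult e y) 1" by simp
  hence "(-1)^m * poly y 1 = e * poly y 1" by (simp add: poly_reflect_poly_nz)
  thus ?thesis using y1 m_def by simp
qed

lemma order_pstar:
  assumes "x \<noteq> 0" shows "order 1 (pstar x) = order 1 x"
proof -
  define m where "m = order 1 x"
  obtain y where y: "x = [:-1,1:] ^ m * y" "\<not> [:-1,1:] dvd y"
    using order_decomp[OF assms(1), of 1] m_def by auto
  have y1: "poly y 1 \<noteq> 0" using y(2) poly_eq_0_iff_dvd by auto
  have "map_poly cnj [:-1,1:] = [:-1,1:]"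
    by (rule poly_eqI) (simp add: coeff_pCons split: nat.split)
  hence ps: "pstar [:-1,1:] = smult (-1) [:-1,1:]"
    by (simp add: pstar_def reflect_lin1)
  have ps1: "poly (pstar y) 1 \<noteq> 0" using y1 by (simp add: poly_pstar)
  have "pstar x = smult ((-1)^m) ([:-1,1:] ^ m * pstar y)"
    using y(1) by (simp add: pstar_mult pstar_pow[OF ps])
  hence "order 1 (pstar x) = order 1 ([:-1,1:] ^ m * pstar y)" by (simp add: order_smult)
  also have "\<dots> = m" using ps1 by (subst order_mult) (auto simp: order_power_n_n order_0I)
  finally show ?thesis using m_def by simp
qed



definition lp :: "int \<Rightarrow> complex poly \<Rightarrow> int \<Rightarrow> complex" where
  "lp m p = (\<lambda>k. if m \<le> k then coeff p (nat (k - m)) else 0)"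

lemma lp_supp: "{k. lp m p k \<noteq> 0} \<subseteq> {m..m + int (degree p)}"
  by (auto simp: lp_def split: if_splits dest!: le_degree)

lemma laurent_lp: "laurent (lp m p)"
  unfolding laurent_def by (rule finite_subset[OF lp_supp]) simp

lemma img_shift: "{m..m + int d} = (\<lambda>i. m + int i) ` {..d}"
proof -
  have "k \<in> (\<lambda>i. m + int i) ` {..d}" if "k \<in> {m..m + int d}" for k
    using that by (auto intro!: image_eqI[of _ _ "nat (k - m)"])
  thus ?thesis by auto
qed

lemma sum_lp:
  "(\<Sum>k\<in>{k. lp m p k \<noteq> 0}. lp m p k * f k) = (\<Sum>i\<le>degree p. coeff p i * f (m + int i))"
proof -
  have "(\<Sum>k\<in>{k. lp m p k \<noteq> 0}. lp m p k * f k) = (\<Sum>k\<in>{m..m + int (degree p)}. lp m p k * f k)"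
    by (rule sum.mono_neutral_left) (use lp_supp in auto)
  also have "\<dots> = (\<Sum>i\<le>degree p. lp m p (m + int i) * f (m + int i))"
    by (subst img_shift, subst sum.reindex) (auto simp: inj_on_def)
  also have "\<dots> = (\<Sum>i\<le>degree p. coeff p i * f (m + int i))"
    by (simp add: lp_def)
  finally show ?thesis .
qed

lemma lmult_lp: "lmult (lp m p) (lp n q) = lp (m + n) (p * q)"
proof
  fix j
  have "lmult (lp m p) (lp n q) j = (\<Sum>i\<le>degree p. coeff p i * lp n q (j - (m + int i)))"
    unfolding lmult_def by (rule sum_lp)
  also have "\<dots> = lp (m + n) (p * q) j"
  proof (cases "m + n \<le> j")
    case False
    thus ?thesis by (auto simp: lp_def intro!: sum.neutral)
  next
    case True
    define N where "N = nat (j - m - n)"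
    define g where "g i = coeff p i * (if i \<le> N then coeff q (N - i) else 0)" for i
    have nd: "nat (j - (m + int x) - n) = N - x" if "x \<le> N" for x
      using True that unfolding N_def by arith
    have nd2: "n \<le> j - (m + int x) \<longleftrightarrow> x \<le> N" for x
      using True unfolding N_def by arith
    have "(\<Sum>i\<le>degree p. coeff p i * lp n q (j - (m + int i))) = (\<Sum>i\<le>degree p. g i)"
      by (intro sum.cong) (auto simp: lp_def g_def nd nd2)
    also have "\<dots> = (\<Sum>i\<le>degree p + N. g i)"
      by (rule sum.mono_neutral_left) (auto simp: g_def coeff_eq_0)
    also have "\<dots> = (\<Sum>i\<le>N. g i)"
      by (rule sum.mono_neutral_right) (auto simp: g_def)
    also have "\<dots> = coeff (p * q) N"
      by (simp add: coeff_mult g_def)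
    also have "\<dots> = lp (m + n) (p * q) j" using True by (simp add: lp_def N_def diff_diff_eq)
    finally show ?thesis .
  qed
  finally show "lmult (lp m p) (lp n q) j = lp (m + n) (p * q) j" .
qed

lemma lstar_lp: "lstar (lp m p) = lp (- m - int (degree p)) (pstar p)"
proof
  fix k
  show "lstar (lp m p) k = lp (- m - int (degree p)) (pstar p) k"
  proof (cases "- m - int (degree p) \<le> k \<and> k \<le> - m")
    case True
    have e: "degree p - nat (k + (m + int (degree p))) = nat (- k - m)" using True by arith
    show ?thesis using True
      by (auto simp: lstar_def lp_def pstar_def coeff_reflect_poly e algebra_simps)
  next
    case False
    show ?thesis
    proof (cases "k > - m")
      case True
      thus ?thesis by (auto simp: lstar_def lp_def pstar_def coeff_reflect_poly)
    next
      case F2: False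
      hence "k < - m - int (degree p)" using False by simp
      hence "nat (- k - m) > degree p" by arith
      thus ?thesis using F2 False by (auto simp: lstar_def lp_def coeff_eq_0)
    qed
  qed
qed

lemma leval_lp: "z \<noteq> 0 \<Longrightarrow> leval (lp m p) z = z powi m * poly p z"
  unfolding leval_def sum_lp
  by (simp add: poly_altdef sum_distrib_left power_int_add mult_ac)

lemma lp_0: "lp m 0 = (\<lambda>_. 0)"
  by (simp add: lp_def fun_eq_iff)

lemma lp_nz: "coeff p 0 \<noteq> 0 \<Longrightarrow> lp m p \<noteq> (\<lambda>_. 0)"
  by (auto simp: lp_def fun_eq_iff intro!: exI[of _ m])

lemma lp_inj:
  assumes "lp a A = lp b B" "coeff A 0 \<noteq> 0" "coeff B 0 \<noteq> 0"
  shows "a = b \<and> A = B"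
proof -
  have "\<not> a < b" using fun_cong[OF assms(1), of a] assms(2) by (auto simp: lp_def)
  moreover have "\<not> b < a" using fun_cong[OF assms(1), of b] assms(3) by (auto simp: lp_def)
  ultimately have ab: "a = b" by simp
  have "coeff A i = coeff B i" for i
    using fun_cong[OF assms(1), of "a + int i"] ab by (simp add: lp_def)
  thus ?thesis using ab poly_eqI by blast
qed

lemma lp_repr:
  assumes "laurent u"
  shows "\<exists>m p. u = lp m p \<and> (u \<noteq> (\<lambda>_. 0) \<longrightarrow> coeff p 0 \<noteq> 0)"
proof (cases "u = (\<lambda>_. 0)")
  case True
  thus ?thesis using lp_0 by metis
next
  case False
  define S where "S = {k. u k \<noteq> 0}"
  have fS: "finite S" using assms by (simp add: laurent_def S_def)
  have neS: "S \<noteq> {}" using False by (auto simp: S_def)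
  define m where "m = Min S"
  define M where "M = Max S"
  have mS: "m \<in> S" using fS neS m_def by simp
  have mle: "k \<in> S \<Longrightarrow> m \<le> k" for k using fS m_def by simp
  have leM: "k \<in> S \<Longrightarrow> k \<le> M" for k using fS M_def by simp
  define f where "f i = u (m + int i)" for i
  have f0: "f i = 0" if "i > nat (M - m)" for i
  proof -
    have "m + int i > M" using that by arith
    thus ?thesis using leM unfolding f_def S_def by force
  qed
  define p where "p = Abs_poly f"
  have cp: "coeff p = f" unfolding p_def by (rule coeff_Abs_poly) (rule f0)
  have "u = lp m p"
  proof
    fix k
    show "u k = lp m p k"
    proof (cases "m \<le> k")
      case True thus ?thesis by (simp add: lp_def cp f_def)
    next
      case False thus ?thesis using mle unfolding S_def lp_def by force
    qed
  qed
  moreover have "coeff p 0 \<noteq> 0" using mS by (simp add: cp f_def S_def)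
  ultimately show ?thesis by blast
qed

lemma sym_to_poly:
  assumes "coeff D 0 \<noteq> 0" "has_symmetry_type (lp k D) \<epsilon> c" "\<epsilon> \<in> {1, -1}"
  shows "reflect_poly D = smult (of_int \<epsilon>) D"
proof -
  define n where "n = degree D"
  have H: "lp k D j = of_int \<epsilon> * lp k D (c - j)" for j
    using assms(2) unfolding has_symmetry_type_def by blast
  have e0: "of_int \<epsilon> \<noteq> (0::complex)" using assms(3) by auto
  have l0: "lead_coeff D \<noteq> 0" using assms(1) by auto
  have "lp k D k \<noteq> 0" using assms(1) by (simp add: lp_def)
  hence "lp k D (c - k) \<noteq> 0" using H[of k] by auto
  hence c1a: "k \<le> c - k" "coeff D (nat (c - k - k)) \<noteq> 0" by (simp_all add: lp_def split: if_splits)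
  hence c1: "k \<le> c - k \<and> nat (c - k - k) \<le> n" using le_degree n_def by blast
  have "lp k D (k + int n) \<noteq> 0" using l0 by (simp add: lp_def n_def)
  hence "lp k D (c - (k + int n)) \<noteq> 0" using H[of "k + int n"] by auto
  hence c2: "k \<le> c - (k + int n)" by (auto simp: lp_def split: if_splits)
  have c: "c = 2 * k + int n" using c1 c2 by arith
  show ?thesis
  proof (rule poly_eqI)
    fix i
    show "coeff (reflect_poly D) i = coeff (smult (of_int \<epsilon>) D) i"
    proof (cases "i \<le> n")
      case True
      have "lp k D (k + int (n - i)) = of_int \<epsilon> * lp k D (c - (k + int (n - i)))" by (rule H)
      moreover have "c - (k + int (n - i)) = k + int i" using True c by (simp add: of_nat_diff)
      ultimately have "coeff D (n - i) = of_int \<epsilon> * coeff D i" by (simp add: lp_def)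
      thus ?thesis using True by (simp add: coeff_reflect_poly n_def)
    next
      case False
      thus ?thesis by (simp add: coeff_reflect_poly n_def coeff_eq_0)
    qed
  qed
qed

lemma lp_out: "\<not> (k \<le> x \<and> x \<le> k + int (degree D)) \<Longrightarrow> lp k D x = 0"
proof (cases "k \<le> x")
  case True
  assume a: "\<not> (k \<le> x \<and> x \<le> k + int (degree D))"
  hence "degree D < nat (x - k)" using True by arith
  thus ?thesis using True by (simp add: lp_def coeff_eq_0)
qed (simp add: lp_def)

lemma poly_to_sym:
  assumes "reflect_poly D = smult (of_int \<epsilon>) D" "\<epsilon> \<in> {1, -1}"
  shows "has_symmetry_type (lp k D) \<epsilon> (2 * k + int (degree D))"
  unfolding has_symmetry_type_def
proof
  fix j
  define n where "n = degree D"
  have cf: "coeff D i = of_int \<epsilon> * coeff D (n - i)" if "i \<le> n" for i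
  proof -
    have h: "coeff (reflect_poly D) (n - i) = coeff (smult (of_int \<epsilon>) D) (n - i)" using assms(1) by simp
    have "coeff (reflect_poly D) (n - i) = coeff D i" using that by (simp add: coeff_reflect_poly n_def)
    thus ?thesis using h by simp
  qed
  show "lp k D j = of_int \<epsilon> * lp k D (2 * k + int (degree D) - j)"
  proof (cases "k \<le> j \<and> j \<le> k + int n")
    case True
    define i where "i = nat (j - k)"
    have ij: "j = k + int i" using True unfolding i_def by simp
    have iN: "i \<le> n" using True unfolding i_def by arith
    have e1: "2 * k + int (degree D) - j = k + int (n - i)" using ij iN unfolding n_def by (simp add: of_nat_diff)
    have l1: "lp k D (k + int (n - i)) = coeff D (n - i)" by (simp add: lp_def)
    have l2: "lp k D (k + int i) = coeff D i" by (simp add: lp_def)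
    show ?thesis unfolding e1 using cf[OF iN] l1 l2 ij by simp
  next
    case False
    have a: "lp k D j = 0" using False lp_out n_def by blast
    have "\<not> (k \<le> 2 * k + int (degree D) - j \<and> 2 * k + int (degree D) - j \<le> k + int (degree D))"
      using False n_def by auto
    hence "lp k D (2 * k + int (degree D) - j) = 0" by (rule lp_out)
    thus ?thesis using a by simp
  qed
qed



lemma coeff_pstar0: "x \<noteq> 0 \<Longrightarrow> coeff (pstar x) 0 \<noteq> 0"
  by (simp add: pstar_def)

lemma lmult_0: "lmult (\<lambda>_. 0) x = (\<lambda>_. 0)"
  by (simp add: lmult_def fun_eq_iff)

lemma lmult_0r: "lmult x (\<lambda>_. 0) = (\<lambda>_. 0)"
  by (simp add: lmult_def fun_eq_iff)

lemma lpstar: "lmult (lp m p) (lstar (lp m p)) = lp (- int (degree p)) (p * pstar p)"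
  by (simp add: lstar_lp lmult_lp)

lemma int_sign: "(e::complex) \<in> {1, -1} \<Longrightarrow> \<exists>\<epsilon>::int. \<epsilon> \<in> {1, -1} \<and> e = of_int \<epsilon>"
  by (auto intro: exI[of _ 1] exI[of _ "-1"])

lemma sym_repr:
  assumes "laurent u" "has_symmetry u" "u \<noteq> (\<lambda>_. 0)"
  shows "\<exists>m p \<epsilon>. u = lp m p \<and> coeff p 0 \<noteq> 0 \<and> \<epsilon> \<in> {1,-1} \<and> reflect_poly p = smult (of_int \<epsilon>) p"
proof -
  obtain m p where mp: "u = lp m p" "coeff p 0 \<noteq> 0" using lp_repr[OF assms(1)] assms(3) by blast
  obtain \<epsilon> c where ec: "\<epsilon> \<in> {1,-1}" "has_symmetry_type u \<epsilon> c" using assms(2) has_symmetry_def by blast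
  show ?thesis using sym_to_poly[OF mp(2) ec(2)[unfolded mp(1)] ec(1)] mp ec(1) by blast
qed

lemma psymI: "coeff p 0 \<noteq> 0 \<Longrightarrow> \<epsilon> \<in> {1,-1} \<Longrightarrow> reflect_poly p = smult (of_int \<epsilon>) p \<Longrightarrow> psym p"
  unfolding psym_def by (rule conjI, force, rule bexI[of _ "of_int \<epsilon>"]) auto

lemma lS_lp:
  assumes "reflect_poly D = smult e D" "e * e = 1" "z \<noteq> 0" "leval (lp k D) (inverse z) \<noteq> 0"
  shows "lS (lp k D) z = e * z powi (2 * k + int (degree D))"
proof -
  have "poly (reflect_poly D) z = z ^ degree D * poly D (inverse z)" using assms(3) by (rule poly_reflect_poly_nz)
  hence "e * poly D z = z ^ degree D * poly D (inverse z)" using assms(1) by simp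
  hence "e * (e * poly D z) = e * (z ^ degree D * poly D (inverse z))" by simp
  hence pz: "poly D z = e * z ^ degree D * poly D (inverse z)" using assms(2) by (simp add: mult.assoc[symmetric])
  have nz: "inverse z powi k * poly D (inverse z) \<noteq> 0" using assms(3,4) by (simp add: leval_lp)
  have "lS (lp k D) z = z powi k * poly D z / (inverse z powi k * poly D (inverse z))"
    using assms(3) by (simp add: lS_def leval_lp)
  also have "\<dots> = e * (z powi k * z ^ degree D * z powi k)"
    using nz assms(3) by (simp add: pz field_simps power_int_inverse)
  also have "z powi k * z ^ degree D * z powi k = z powi (2 * k + int (degree D))"
  proof -
    have a: "z powi (k + k) = z powi k * z powi k" using assms(3) by (intro power_int_add) simp
    have b: "z powi (2 * k + int (degree D)) = z powi (2 * k) * z powi int (degree D)"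
      using assms(3) by (intro power_int_add) simp
    have "z powi (2 * k + int (degree D)) = z powi k * z powi k * z powi int (degree D)"
      using b a by (simp only: mult_2)
    thus ?thesis by (simp add: power_int_of_nat mult_ac)
  qed
  finally show ?thesis .
qed



theorem lemma3p17:
  fixes u v :: "int \<Rightarrow> complex"
  assumes "laurent u" and "laurent v"
    and "has_symmetry u" and "has_symmetry v"
    and "u \<noteq> (\<lambda>_. 0)" and "v \<noteq> (\<lambda>_. 0)"
    and "ldvd (lmult v (lstar v)) (lmult u (lstar u))"
  shows "(\<exists>d. laurent d \<and> has_symmetry d \<and>
            lmult (lmult d (lstar d)) (lmult v (lstar v)) = lmult u (lstar u))
       \<and> (\<forall>d. laurent d \<and> has_symmetry d \<and>
            lmult (lmult d (lstar d)) (lmult v (lstar v)) = lmult u (lstar u) \<longrightarrow>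
            (\<exists>k::int. \<forall>z::complex. z \<noteq> 0 \<and> leval d (inverse z) \<noteq> 0 \<and>
                 leval u (inverse z) \<noteq> 0 \<and> leval v (inverse z) \<noteq> 0 \<and> leval v z \<noteq> 0 \<longrightarrow>
                 lS d z = z powi (2 * k) * lS u z / lS v z))"
proof -
  obtain m p \<epsilon>u where U: "u = lp m p" "coeff p 0 \<noteq> 0" "\<epsilon>u \<in> {1,-1}"
      "reflect_poly p = smult (of_int \<epsilon>u) p"
    using sym_repr[OF assms(1,3,5)] by blast
  obtain n q \<epsilon>v where V: "v = lp n q" "coeff q 0 \<noteq> 0" "\<epsilon>v \<in> {1,-1}"
      "reflect_poly q = smult (of_int \<epsilon>v) q"
    using sym_repr[OF assms(2,4,6)] by blast
  have sp: "psym p" using psymI U by blast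
  have sq: "psym q" using psymI V by blast
  have p0: "p \<noteq> 0" "q \<noteq> 0" using U V by auto
  define P where "P = p * pstar p"
  define Qv where "Qv = q * pstar q"
  have P0: "coeff P 0 \<noteq> 0" using U p0 by (simp add: P_def coeff_mult_0 coeff_pstar0)
  have Q0: "coeff Qv 0 \<noteq> 0" using V p0 by (simp add: Qv_def coeff_mult_0 coeff_pstar0)
  have uu: "lmult u (lstar u) = lp (- int (degree p)) P" using U(1) by (simp add: lpstar P_def)
  have vv: "lmult v (lstar v) = lp (- int (degree q)) Qv" using V(1) by (simp add: lpstar Qv_def)
  have degP: "degree P = 2 * degree p" using p0 U by (simp add: P_def degree_mult_eq degree_pstar)
  have degQ: "degree Qv = 2 * degree q" using p0 V by (simp add: Qv_def degree_mult_eq degree_pstar)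
  have ex: "\<exists>d. laurent d \<and> has_symmetry d \<and>
            lmult (lmult d (lstar d)) (lmult v (lstar v)) = lmult u (lstar u)"
  proof -
    obtain q0 where q0: "laurent q0" "lmult u (lstar u) = lmult (lmult v (lstar v)) q0"
      using assms(7) ldvd_def by blast
    obtain s S where sS: "q0 = lp s S" "q0 \<noteq> (\<lambda>_. 0) \<longrightarrow> coeff S 0 \<noteq> 0"
      using lp_repr[OF q0(1)] by blast
    have "q0 \<noteq> (\<lambda>_. 0)"
    proof
      assume "q0 = (\<lambda>_. 0)"
      hence "lp (- int (degree p)) P = (\<lambda>_. 0)" using q0(2) uu by (simp add: lmult_0r)
      thus False using lp_nz[OF P0] by blast
    qed
    hence S0: "coeff S 0 \<noteq> 0" using sS by blast
    have "lp (- int (degree p)) P = lp (- int (degree q) + s) (Qv * S)"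
      using q0(2) uu vv sS(1) by (simp add: lmult_lp)
    hence "P = Qv * S" using lp_inj P0 Q0 S0 by (simp add: coeff_mult_0)
    hence dv: "Qv dvd P" by simp
    obtain D where D: "psym D" "D * pstar D * Qv = P"
      using existence_aux[OF refl sq sp dv[unfolded P_def Qv_def]] P_def Qv_def by blast
    have D0: "D \<noteq> 0" "coeff D 0 \<noteq> 0" using D(1) coeff0_nz psym_def by auto
    obtain e where e: "e \<in> {1,-1}" "reflect_poly D = smult e D" using D(1) psym_def by blast
    obtain \<epsilon> where eps: "\<epsilon> \<in> {1,-1}" "e = of_int \<epsilon>" using int_sign[OF e(1)] by blast
    define d where "d = lp 0 D"
    have "has_symmetry_type d \<epsilon> (2 * 0 + int (degree D))"
      unfolding d_def by (rule poly_to_sym) (use e eps in auto)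
    hence hs: "has_symmetry d" using eps(1) has_symmetry_def by blast
    have "degree (D * pstar D * Qv) = degree P" using D(2) by simp
    hence dg: "degree D + degree q = degree p" using D0 p0 degP degQ
      by (simp add: degree_mult_eq degree_pstar Qv_def)
    have "lmult (lmult d (lstar d)) (lmult v (lstar v)) = lp (- int (degree D) - int (degree q)) (D * pstar D * Qv)"
      unfolding d_def lpstar vv by (simp add: lmult_lp)
    also have "- int (degree D) - int (degree q) = - int (degree p)" using dg by simp
    hence "lp (- int (degree D) - int (degree q)) (D * pstar D * Qv) = lmult u (lstar u)"
      using uu D(2) by simp
    finally have "lmult (lmult d (lstar d)) (lmult v (lstar v)) = lmult u (lstar u)" .
    thus ?thesis using hs laurent_lp d_def by blast
  qed
  have part2: "\<exists>k::int. \<forall>z::complex. z \<noteq> 0 \<and> leval d (inverse z) \<noteq> 0 \<and>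
                 leval u (inverse z) \<noteq> 0 \<and> leval v (inverse z) \<noteq> 0 \<and> leval v z \<noteq> 0 \<longrightarrow>
                 lS d z = z powi (2 * k) * lS u z / lS v z"
    if hd: "laurent d" "has_symmetry d"
       "lmult (lmult d (lstar d)) (lmult v (lstar v)) = lmult u (lstar u)" for d
  proof -
    have "d \<noteq> (\<lambda>_. 0)"
    proof
      assume "d = (\<lambda>_. 0)"
      hence "lp (- int (degree p)) P = (\<lambda>_. 0)" using hd(3) uu by (simp add: lmult_0)
      thus False using lp_nz[OF P0] by blast
    qed
    then obtain k D \<epsilon>d where Dd: "d = lp k D" "coeff D 0 \<noteq> 0" "\<epsilon>d \<in> {1,-1}"
      "reflect_poly D = smult (of_int \<epsilon>d) D"
      using sym_repr[OF hd(1,2)] by blast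
    have D0: "D \<noteq> 0" using Dd by auto
    have DD0: "coeff (D * pstar D * Qv) 0 \<noteq> 0" using Dd(2) D0 Q0 by (simp add: coeff_mult_0 coeff_pstar0)
    have "lp (k + (- k - int (degree D)) + - int (degree q)) (D * pstar D * Qv) = lp (- int (degree p)) P"
      using hd(3) uu vv Dd(1) by (simp add: lstar_lp lmult_lp)
    hence eqs: "D * pstar D * Qv = P" "k + (- k - int (degree D)) + - int (degree q) = - int (degree p)"
      using lp_inj[OF _ DD0 P0] by blast+
    have dg: "int (degree p) = int (degree D) + int (degree q)" using eqs(2) by simp
    have "order 1 (D * pstar D * Qv) = order 1 P" using eqs(1) by simp
    hence "2 * order 1 D + 2 * order 1 q = 2 * order 1 p"
      using D0 p0 by (simp add: order_mult order_pstar P_def Qv_def)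
    hence ord: "order 1 p = order 1 D + order 1 q" by simp
    have eu: "of_int \<epsilon>u = ((-1::complex) ^ order 1 p)" using sym_order[OF p0(1) U(4)] .
    have ev: "of_int \<epsilon>v = ((-1::complex) ^ order 1 q)" using sym_order[OF p0(2) V(4)] .
    have ed: "of_int \<epsilon>d = ((-1::complex) ^ order 1 D)" using sym_order[OF D0 Dd(4)] .
    have euv: "(of_int \<epsilon>u :: complex) = of_int \<epsilon>d * of_int \<epsilon>v" using eu ev ed ord by (simp add: power_add)
    have sq1: "(of_int e :: complex) * of_int e = 1" if "e \<in> {1,-1}" for e::int using that by auto
    show ?thesis
    proof (intro exI[of _ "k - m + n"] allI impI)
      fix z :: complex
      assume z: "z \<noteq> 0 \<and> leval d (inverse z) \<noteq> 0 \<and> leval u (inverse z) \<noteq> 0 \<and>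
                 leval v (inverse z) \<noteq> 0 \<and> leval v z \<noteq> 0"
      have Sd: "lS d z = of_int \<epsilon>d * z powi (2 * k + int (degree D))"
        using lS_lp[OF Dd(4) sq1[OF Dd(3)]] z Dd(1) by blast
      have Su: "lS u z = of_int \<epsilon>u * z powi (2 * m + int (degree p))"
        using lS_lp[OF U(4) sq1[OF U(3)]] z U(1) by blast
      have Sv: "lS v z = of_int \<epsilon>v * z powi (2 * n + int (degree q))"
        using lS_lp[OF V(4) sq1[OF V(3)]] z V(1) by blast
      have ev0: "(of_int \<epsilon>v :: complex) \<noteq> 0" using V(3) by auto
      have zz: "z powi (2 * (k - m + n)) * z powi (2 * m + int (degree p)) =
                z powi (2 * k + int (degree D)) * z powi (2 * n + int (degree q))"
        using z dg by (simp add: power_int_add[symmetric] algebra_simps)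
      have zn: "z powi (2 * n + int (degree q)) \<noteq> 0" using z by simp
      have aux: "K * (ed * ev * b) / (ev * c) = ed * a"
        if "ev \<noteq> 0" "c \<noteq> 0" "K * b = a * c" for K ed ev b c a :: complex
      proof -
        have "K * (ed * ev * b) / (ev * c) = ed * (K * b) / c" using that(1) by (simp add: field_simps)
        also have "\<dots> = ed * (a * c) / c" using that(3) by simp
        also have "\<dots> = ed * a" using that(2) by simp
        finally show ?thesis .
      qed
      show "lS d z = z powi (2 * (k - m + n)) * lS u z / lS v z"
        unfolding Sd Su Sv euv by (rule aux[OF ev0 zn zz, symmetric])
    qed
  qed
  show ?thesis using ex part2 by blast
qed


end
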